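(* Let $\{\mathcal{S}(t)\}_{t\ge0}$ be a GSP with parameters $\lambda_1,\dots,\lambda_k,\mu_1,\dots,\mu_k\ge0$, $\Lambda=\sum_j\lambda_j$, $T=\sum_j\mu_j$, $\Lambda+T>0$, and let $\mathcal{S}_A(t)=\frac1t\int_0^t\mathcal{S}(s)\,ds$. Let $\{N(t)\}_{t\ge0}$ be a Poisson process with rate $\Lambda+T$, and $X_1,X_2,\dots$ i.i.d., independent of $N$, with density $$f(x)=\frac{1}{\Lambda+T}\sum_{j=1}^k\frac{\lambda_j}{j}\mathbf{1}_{[0,j]}(x)+\frac{1}{\Lambda+T}\sum_{j=1}^k\frac{\mu_j}{j}\mathbf{1}_{[-j,0]}(x).$$ Then for every $t>0$, $\mathcal{S}_A(t)\overset{d}{=}\sum_{i=1}^{N(t)}X_i$.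
   Context: A generalized counting process (GCP) with rates $\lambda_1,\dots,\lambda_k\ge0$ is a Lévy process $\{\mathbb{M}(t)\}_{t\ge0}$ with $\mathbb{M}(0)=0$ and $\mathbb{E}[u^{\mathbb{M}(t)}]=\exp\left(t\sum_{j=1}^k\lambda_j(u^j-1)\right)$. A generalized Skellam process (GSP) is $\mathcal{S}(t)=\mathbb{M}_1(t)-\mathbb{M}_2(t)$ where $\mathbb{M}_1,\mathbb{M}_2$ are independent GCPs with rates $\lambda_1,\dots,\lambda_k$ and $\mu_1,\dots,\mu_k$ respectively. *)

theory Defs
  imports "HOL-Probability.Probability"
begin

definition cadlag_path :: "(real \<Rightarrow> real) \<Rightarrow> bool" where
  "cadlag_path p \<longleftrightarrow>
     (\<forall>t\<ge>0. (p \<longlongrightarrow> p t) (at_right t)) \<and>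
     (\<forall>t>0. \<exists>l. (p \<longlongrightarrow> l) (at_left t))"

definition is_GCP :: "'a measure \<Rightarrow> nat \<Rightarrow> (nat \<Rightarrow> real) \<Rightarrow> (real \<Rightarrow> 'a \<Rightarrow> nat) \<Rightarrow> bool" where
  "is_GCP M k lam X \<longleftrightarrow>
     prob_space M \<and>
     (\<forall>j\<in>{1..k}. lam j \<ge> 0) \<and>
     (\<forall>t\<ge>0. X t \<in> measurable M (count_space (UNIV::nat set))) \<and>
     (\<forall>\<omega>\<in>space M. X 0 \<omega> = 0) \<and>
     (\<forall>\<omega>\<in>space M. cadlag_path (\<lambda>s. real (X s \<omega>))) \<and>
     (\<forall>(n::nat) (\<tau>::nat \<Rightarrow> real). 0 \<le> \<tau> 0 \<and> (\<forall>i<n. \<tau> i \<le> \<tau> (Suc i)) \<longrightarrow>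
        prob_space.indep_vars M (\<lambda>_. borel)
          (\<lambda>i \<omega>. real (X (\<tau> (Suc i)) \<omega>) - real (X (\<tau> i) \<omega>)) {..<n}) \<and>
     (\<forall>s t. 0 \<le> s \<longrightarrow> 0 \<le> t \<longrightarrow>
        distr M borel (\<lambda>\<omega>. real (X (s + t) \<omega>) - real (X s \<omega>))
          = distr M borel (\<lambda>\<omega>. real (X t \<omega>))) \<and>
     (\<forall>t\<ge>0. \<forall>u::real. \<bar>u\<bar> \<le> 1 \<longrightarrow>
        integral\<^sup>L M (\<lambda>\<omega>. u ^ X t \<omega>) = exp (t * (\<Sum>j=1..k. lam j * (u ^ j - 1))))"

text \<open>Independence of two random elements with possibly different value types
  (the library's indep_var requires equal types): both are measurable and the
  sigma-algebras they generate are independent.\<close>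
definition indep_rv :: "'a measure \<Rightarrow> 'b measure \<Rightarrow> ('a \<Rightarrow> 'b) \<Rightarrow> 'c measure \<Rightarrow> ('a \<Rightarrow> 'c) \<Rightarrow> bool" where
  "indep_rv M Ma A Mb B \<longleftrightarrow>
     A \<in> measurable M Ma \<and> B \<in> measurable M Mb \<and>
     prob_space.indep_set M (sets (vimage_algebra (space M) A Ma))
                            (sets (vimage_algebra (space M) B Mb))"

definition path_of :: "(real \<Rightarrow> 'a \<Rightarrow> 'b) \<Rightarrow> 'a \<Rightarrow> real \<Rightarrow> 'b" where
  "path_of X \<omega> = (\<lambda>t\<in>{0..}. X t \<omega>)"

definition is_GSP_pair :: "'a measure \<Rightarrow> nat \<Rightarrow> (nat \<Rightarrow> real) \<Rightarrow> (nat \<Rightarrow> real)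
    \<Rightarrow> (real \<Rightarrow> 'a \<Rightarrow> nat) \<Rightarrow> (real \<Rightarrow> 'a \<Rightarrow> nat) \<Rightarrow> bool" where
  "is_GSP_pair M k lam mu M1 M2 \<longleftrightarrow>
     is_GCP M k lam M1 \<and> is_GCP M k mu M2 \<and>
     indep_rv M
       (Pi\<^sub>M {0::real..} (\<lambda>_. count_space (UNIV::nat set))) (path_of M1)
       (Pi\<^sub>M {0::real..} (\<lambda>_. count_space (UNIV::nat set))) (path_of M2)"

definition GSP :: "(real \<Rightarrow> 'a \<Rightarrow> nat) \<Rightarrow> (real \<Rightarrow> 'a \<Rightarrow> nat) \<Rightarrow> real \<Rightarrow> 'a \<Rightarrow> real" where
  "GSP M1 M2 t \<omega> = real (M1 t \<omega>) - real (M2 t \<omega>)"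

definition time_avg :: "(real \<Rightarrow> 'a \<Rightarrow> real) \<Rightarrow> real \<Rightarrow> 'a \<Rightarrow> real" where
  "time_avg S t \<omega> = (1 / t) * integral {0..t} (\<lambda>s. S s \<omega>)"

definition is_poisson_process :: "'a measure \<Rightarrow> real \<Rightarrow> (real \<Rightarrow> 'a \<Rightarrow> nat) \<Rightarrow> bool" where
  "is_poisson_process M r N \<longleftrightarrow> is_GCP M 1 (\<lambda>_. r) N"

definition gsp_density :: "nat \<Rightarrow> (nat \<Rightarrow> real) \<Rightarrow> (nat \<Rightarrow> real) \<Rightarrow> real \<Rightarrow> real" where
  "gsp_density k lam mu x =
     1 / ((\<Sum>j=1..k. lam j) + (\<Sum>j=1..k. mu j)) *
       (\<Sum>j=1..k. lam j / real j * indicator {0..real j} x)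
   + 1 / ((\<Sum>j=1..k. lam j) + (\<Sum>j=1..k. mu j)) *
       (\<Sum>j=1..k. mu j / real j * indicator {- real j..0} x)"

end

theory Submission
  imports Defs "HOL-Complex_Analysis.Complex_Analysis"
begin

lemma indep_rv_compose:
  assumes P: "prob_space M" and I: "indep_rv M Ma A Mb B"
    and f: "f \<in> measurable Ma N1" and g: "g \<in> measurable Mb N2"
  shows "prob_space.indep_var M N1 (\<lambda>\<omega>. f (A \<omega>)) N2 (\<lambda>\<omega>. g (B \<omega>))"
proof -
  interpret prob_space M by fact
  have A: "A \<in> measurable M Ma" and B: "B \<in> measurable M Mb"
    and ind: "indep_set (sets (vimage_algebra (space M) A Ma)) (sets (vimage_algebra (space M) B Mb))"
    using I unfolding indep_rv_def by auto
  have gen: "sigma_sets (space M) {(\<lambda>\<omega>. h (Z \<omega>)) -` C \<inter> space M | C. C \<in> sets N}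
       \<subseteq> sets (vimage_algebra (space M) Z Mz)"
    if Z: "Z \<in> measurable M Mz" and h: "h \<in> measurable Mz N" for Z Mz h and N :: "'d measure"
  proof -
    have sZ: "sets (vimage_algebra (space M) Z Mz) = {Z -` C \<inter> space M | C. C \<in> sets Mz}"
      using Z by (intro sets_vimage_algebra2) (auto simp: measurable_def)
    have *: "\<And>S. S \<subseteq> sets (vimage_algebra (space M) Z Mz) \<Longrightarrow> sigma_sets (space M) S \<subseteq> sets (vimage_algebra (space M) Z Mz)"
      using sets.sigma_sets_subset[of _ "vimage_algebra (space M) Z Mz"] by simp
    show ?thesis
    proof (rule *, rule subsetI)
      fix x assume "x \<in> {(\<lambda>\<omega>. h (Z \<omega>)) -` C \<inter> space M |C. C \<in> sets N}"
      then obtain C where C: "C \<in> sets N" "x = (\<lambda>\<omega>. h (Z \<omega>)) -` C \<inter> space M" by auto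
      have "x = Z -` (h -` C \<inter> space Mz) \<inter> space M"
        using C Z by (auto simp: measurable_def)
      moreover have "h -` C \<inter> space Mz \<in> sets Mz" using h C by (auto simp: measurable_def)
      ultimately show "x \<in> sets (vimage_algebra (space M) Z Mz)" unfolding sZ by blast
    qed
  qed
  have fA: "(\<lambda>\<omega>. f (A \<omega>)) \<in> measurable M N1" using f A by measurable
  have gB: "(\<lambda>\<omega>. g (B \<omega>)) \<in> measurable M N2" using g B by measurable
  show ?thesis unfolding indep_var_eq
    using fA gB gen[OF A f] gen[OF B g] unfolding indep_set_def
    by (auto intro!: indep_sets_mono_sets[OF ind[unfolded indep_set_def]] split: bool.split) blast+
qed

lemma nat_rv_sums:
  fixes g :: "nat \<Rightarrow> 'b::{banach, second_countable_topology}"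
  assumes P: "prob_space M" and Y: "Y \<in> measurable M (count_space UNIV)"
    and bnd: "\<And>n. norm (g n) \<le> B"
  shows "(\<lambda>n. measure M {\<omega>\<in>space M. Y \<omega> = n} *\<^sub>R g n) sums (\<integral>\<omega>. g (Y \<omega>) \<partial>M)"
proof -
  interpret prob_space M by fact
  define s where "s m \<omega> = (\<Sum>n<m. indicator {\<omega>\<in>space M. Y \<omega> = n} \<omega> *\<^sub>R g n)" for m \<omega>
  have ev: "{\<omega>\<in>space M. Y \<omega> = n} \<in> sets M" for n using Y by measurable
  have sm: "s m \<in> borel_measurable M" for m unfolding s_def using ev
    by (intro borel_measurable_sum borel_measurable_scaleR) auto
  have gm: "(\<lambda>\<omega>. g (Y \<omega>)) \<in> borel_measurable M"
    using Y by (intro measurable_compose[OF Y]) auto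
  have s_eq: "s m \<omega> = (if Y \<omega> < m then g (Y \<omega>) else 0)" if "\<omega> \<in> space M" for m \<omega>
  proof -
    have "s m \<omega> = (\<Sum>n<m. (if n = Y \<omega> then g n else 0))"
      unfolding s_def using that by (intro sum.cong) (auto simp: indicator_def)
    also have "\<dots> = (if Y \<omega> < m then g (Y \<omega>) else 0)"
      by (simp add: sum.delta)
    finally show ?thesis .
  qed
  have lim: "AE \<omega> in M. (\<lambda>m. s m \<omega>) \<longlonglongrightarrow> g (Y \<omega>)"
  proof (rule AE_I2)
    fix \<omega> assume w: "\<omega> \<in> space M"
    have "eventually (\<lambda>m. s m \<omega> = g (Y \<omega>)) sequentially"
      using eventually_gt_at_top[of "Y \<omega>"] by eventually_elim (use w s_eq in auto)
    then show "(\<lambda>m. s m \<omega>) \<longlonglongrightarrow> g (Y \<omega>)" by (rule tendsto_eventually)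
  qed
  have B0: "0 \<le> B" using bnd[of 0] norm_ge_zero[of "g 0"] by linarith
  have bound: "AE \<omega> in M. norm (s m \<omega>) \<le> B" for m
    by (rule AE_I2) (use B0 bnd in \<open>auto simp: s_eq\<close>)
  have "(\<lambda>m. integral\<^sup>L M (s m)) \<longlonglongrightarrow> (\<integral>\<omega>. g (Y \<omega>) \<partial>M)"
    by (rule integral_dominated_convergence[OF gm sm _ lim bound]) simp
  moreover have "integral\<^sup>L M (s m) = (\<Sum>n<m. measure M {\<omega>\<in>space M. Y \<omega> = n} *\<^sub>R g n)" for m
  proof -
    have int: "integrable M (indicator {\<omega>\<in>space M. Y \<omega> = n} :: 'a \<Rightarrow> real)" for n
      using ev by (intro integrable_real_indicator) (auto simp: emeasure_eq_measure)
    have "integral\<^sup>L M (s m) = (\<Sum>n<m. \<integral>\<omega>. indicator {\<omega>\<in>space M. Y \<omega> = n} \<omega> *\<^sub>R g n \<partial>M)"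
      unfolding s_def by (rule Bochner_Integration.integral_sum[where f="\<lambda>n \<omega>. indicator {\<omega>\<in>space M. Y \<omega> = n} \<omega> *\<^sub>R g n"]) (use int in auto)
    also have "\<dots> = (\<Sum>n<m. measure M {\<omega>\<in>space M. Y \<omega> = n} *\<^sub>R g n)"
    proof (rule sum.cong[OF refl])
      fix n
      have "(\<integral>\<omega>. indicator {\<omega>\<in>space M. Y \<omega> = n} \<omega> *\<^sub>R g n \<partial>M)
          = (\<integral>\<omega>. indicator {\<omega>\<in>space M. Y \<omega> = n} \<omega> \<partial>M) *\<^sub>R g n"
        by (rule integral_scaleR_left) (use int in auto)
      also have "\<dots> = measure M {\<omega>\<in>space M. Y \<omega> = n} *\<^sub>R g n"
        by (simp add: Int_absorb2)
      finally show "(\<integral>\<omega>. indicator {\<omega>\<in>space M. Y \<omega> = n} \<omega> *\<^sub>R g n \<partial>M) = measure M {\<omega>\<in>space M. Y \<omega> = n} *\<^sub>R g n" .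
    qed
    finally show ?thesis .
  qed
  ultimately show ?thesis unfolding sums_def by simp
qed

lemma pgf_extend:
  fixes G :: "complex \<Rightarrow> complex"
  assumes P: "prob_space M" and Y: "Y \<in> measurable M (count_space UNIV)"
    and holG: "G holomorphic_on UNIV"
    and real_eq: "\<And>u::real. \<bar>u\<bar> \<le> 1 \<Longrightarrow> complex_of_real (\<integral>\<omega>. u ^ Y \<omega> \<partial>M) = G (complex_of_real u)"
    and z: "norm z \<le> 1"
  shows "(\<integral>\<omega>. z ^ Y \<omega> \<partial>M) = G z"
proof -
  interpret prob_space M by fact
  define p where "p n = measure M {\<omega>\<in>space M. Y \<omega> = n}" for n
  define F where "F z = (\<Sum>n. complex_of_real (p n) * z ^ n)" for z :: complex
  have p0: "p n \<ge> 0" for n unfolding p_def by simp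
  have sumsC: "(\<lambda>n. complex_of_real (p n) * w ^ n) sums (\<integral>\<omega>. w ^ Y \<omega> \<partial>M)" if "norm w \<le> 1" for w :: complex
    using nat_rv_sums[OF P Y, of "\<lambda>n. w ^ n" 1] that
    by (simp add: p_def scaleR_conv_of_real norm_power power_le_one)
  have FC: "F w = (\<integral>\<omega>. w ^ Y \<omega> \<partial>M)" if "norm w \<le> 1" for w :: complex
    using sumsC[OF that] unfolding F_def by (simp add: sums_iff)
  have sumsR: "(\<lambda>n. p n * u ^ n) sums (\<integral>\<omega>. u ^ Y \<omega> \<partial>M)" if "\<bar>u\<bar> \<le> 1" for u :: real
    using nat_rv_sums[OF P Y, of "\<lambda>n. u ^ n" 1] that
    by (simp add: p_def power_abs power_le_one)
  have FR: "F (complex_of_real u) = G (complex_of_real u)" if "\<bar>u\<bar> \<le> 1" for u :: real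
  proof -
    have "(\<lambda>n. complex_of_real (p n * u ^ n)) sums complex_of_real (\<integral>\<omega>. u ^ Y \<omega> \<partial>M)"
      using sumsR[OF that] by (rule sums_of_real)
    then have "F (complex_of_real u) = complex_of_real (\<integral>\<omega>. u ^ Y \<omega> \<partial>M)"
      unfolding F_def by (simp add: sums_iff)
    then show ?thesis using real_eq[OF that] by simp
  qed
  have psum: "summable p"
    using sumsR[of 1] by (simp add: sums_iff)
  define f where "f = Abs_fps (\<lambda>n. complex_of_real (p n))"
  have conv: "fps_conv_radius f \<ge> 1"
  proof -
    have "summable (\<lambda>n. fps_nth f n * 1 ^ n)"
    proof -
      have "summable (\<lambda>n. complex_of_real (p n))" by (rule summable_of_real[OF psum])
      then show ?thesis by (simp add: f_def)
    qed
    from conv_radius_geI[OF this] show ?thesis by (simp add: fps_conv_radius_def one_ereal_def)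
  qed
  have Fe: "F = eval_fps f" unfolding F_def eval_fps_def f_def by (simp add: fun_eq_iff)
  have holF: "F holomorphic_on ball 0 1"
    unfolding Fe
  proof (rule holomorphic_on_eval_fps)
    show "ball 0 1 \<subseteq> eball 0 (fps_conv_radius f)"
      using eball_mono[OF conv, of 0] eball_ereal[of 0 1] by (simp add: one_ereal_def)
  qed
  have inner: "F w = G w" if "w \<in> ball 0 1" for w
  proof -
    have "(\<lambda>w. F w - G w) w = 0"
    proof (rule analytic_continuation[where f="\<lambda>w. F w - G w" and w=w and S="ball 0 1" and U="complex_of_real ` {-1<..<1}" and \<xi>=0])
      show "(\<lambda>w. F w - G w) holomorphic_on ball 0 1"
        using holF holG by (intro holomorphic_intros) (auto intro: holomorphic_on_subset)
      show "complex_of_real ` {-1<..<1} \<subseteq> ball 0 1" by auto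
      show "0 islimpt complex_of_real ` {-1<..<1}"
        unfolding islimpt_approachable
      proof (intro allI impI)
        fix e :: real assume e: "0 < e"
        let ?x = "complex_of_real (min (e/2) (1/2))"
        have "?x \<in> complex_of_real ` {-1<..<1}" using e by auto
        moreover have "?x \<noteq> 0" using e by simp
        moreover have "dist ?x 0 < e" using e by (simp add: dist_norm)
        ultimately show "\<exists>x'\<in>complex_of_real ` {- 1<..<1}. x' \<noteq> 0 \<and> dist x' 0 < e" by blast
      qed
      show "\<And>z. z \<in> complex_of_real ` {- 1<..<1} \<Longrightarrow> F z - G z = 0"
        using FR by auto
    qed (use that in auto)
    then show ?thesis by simp
  qed
  have contF: "continuous_on (cball 0 1) F"
  proof -
    have "uniform_limit (cball 0 1) (\<lambda>n w. \<Sum>i<n. complex_of_real (p i) * w ^ i) (\<lambda>w. \<Sum>i. complex_of_real (p i) * w ^ i) sequentially"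
      by (rule Weierstrass_m_test[where M=p]) (auto simp: norm_mult norm_power p0 intro!: mult_left_le power_le_one psum)
    then show ?thesis unfolding F_def
      by (intro uniform_limit_theorem[where F=sequentially]) (auto intro!: always_eventually continuous_intros)
  qed
  have "F z = G z"
  proof -
    define zs where "zs m = (1 - 1 / (real m + 2)) *\<^sub>R z" for m :: nat
    have zlim: "zs \<longlonglongrightarrow> z"
    proof -
      have "(\<lambda>m. 1 - 1 / (real m + 2)) \<longlonglongrightarrow> 1 - 0"
        by (intro tendsto_diff tendsto_const) real_asymp
      then have "(\<lambda>m. (1 - 1 / (real m + 2)) *\<^sub>R z) \<longlonglongrightarrow> 1 *\<^sub>R z"
        by (intro tendsto_scaleR tendsto_const) simp
      then show ?thesis by (simp add: zs_def[abs_def])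
    qed
    have r: "0 \<le> 1 - 1 / (real m + 2)" "1 - 1 / (real m + 2) < 1" for m :: nat
      by (auto simp: field_simps)
    have zin: "zs m \<in> ball 0 1" for m
    proof -
      have "norm (zs m) = (1 - 1 / (real m + 2)) * norm z" using r[of m] by (simp add: zs_def)
      also have "\<dots> < 1"
        using r[of m] z by (smt (verit) mult_left_le)
      finally show ?thesis by simp
    qed
    have "(\<lambda>m. F (zs m)) \<longlonglongrightarrow> F z"
    proof -
      have "\<forall>\<^sub>F x in sequentially. cmod (zs x) \<le> 1"
        using zin by (intro always_eventually) (auto simp: less_imp_le)
      then show ?thesis using continuous_on_tendsto_compose[OF contF zlim] z by (auto simp: o_def)
    qed
    moreover have "(\<lambda>m. G (zs m)) \<longlonglongrightarrow> G z"
      using continuous_on_tendsto_compose[OF holomorphic_on_imp_continuous_on[OF holG] zlim]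
      by (auto simp: o_def)
    moreover have "F (zs m) = G (zs m)" for m using inner[OF zin] .
    ultimately show ?thesis using LIMSEQ_unique by (metis (no_types, lifting) ext)
  qed
  then show ?thesis using FC[OF z] by simp
qed

lemma step_has_integral:
  fixes f :: "real \<Rightarrow> 'b::euclidean_space"
  assumes t: "t > 0" and N: "N > (0::nat)"
  shows "((\<lambda>s. f (t * real_of_int \<lceil>real N * s / t\<rceil> / real N)) has_integral
           (t / real N) *\<^sub>R (\<Sum>m=1..N. f (real m * t / real N))) {0..t}"
proof -
  define b where "b m = real m * t / real N" for m :: nat
  define I where "I m = {b (m - 1) .. b m}" for m :: nat
  have Nr: "real N > 0" using N by simp
  have each: "((\<lambda>s. if s \<in> I m then f (b m) else 0) has_integral (t / real N) *\<^sub>R f (b m)) {0..t}"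
    if m: "m \<in> {1..N}" for m
  proof -
    have le: "b (m - 1) \<le> b m" unfolding b_def using t Nr m
      by (intro divide_right_mono mult_right_mono) auto
    have c: "((\<lambda>s. f (b m)) has_integral (b m - b (m - 1)) *\<^sub>R f (b m)) {b (m - 1)..b m}"
      using has_integral_const_real[of "f (b m)" "b (m - 1)" "b m"] le by simp
    have "b m - b (m - 1) = t / real N" using m Nr unfolding b_def
      by (simp add: field_simps of_nat_diff)
    moreover have "{b (m - 1)..b m} \<subseteq> {0..t}"
      using m t Nr unfolding b_def by (auto simp: field_simps mult_left_mono)
    ultimately show ?thesis
      using has_integral_restrict_closed_subinterval[of "\<lambda>s. f (b m)" _ "b (m - 1)" "b m" 0 t] c
      unfolding I_def by simp
  qed
  have sum: "((\<lambda>s. \<Sum>m=1..N. if s \<in> I m then f (b m) else 0) has_integral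
      (\<Sum>m=1..N. (t / real N) *\<^sub>R f (b m))) {0..t}"
    by (rule has_integral_sum) (use each in auto)
  have sum2: "((\<lambda>s. \<Sum>m=1..N. if s \<in> I m then f (b m) else 0) has_integral
      (t / real N) *\<^sub>R (\<Sum>m=1..N. f (real m * t / real N))) {0..t}"
    using sum by (simp add: scaleR_sum_right b_def)
  show ?thesis
  proof (rule has_integral_spike_finite[OF _ _ sum2])
    show "finite (b ` {..N})" by simp
  next
    fix s assume s: "s \<in> {0..t} - b ` {..N}"
    define x where "x = real N * s / t"
    have x0: "0 \<le> x" and xN: "x \<le> real N" using s t Nr unfolding x_def by (auto simp: field_simps)
    have nonint: "x \<noteq> real m" if "m \<le> N" for m
    proof
      assume "x = real m"
      then have "s = b m" unfolding x_def b_def using t Nr by (simp add: field_simps)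
      with s that show False by auto
    qed
    define c where "c = \<lceil>x\<rceil>"
    have c1: "real_of_int c - 1 < x" "x \<le> real_of_int c" unfolding c_def by linarith+
    have cpos: "c \<ge> 1"
    proof (rule ccontr)
      assume "\<not> c \<ge> 1" then have "c \<le> 0" by simp
      then have "x \<le> 0" using c1 by linarith
      then have "x = real 0" using x0 by simp
      with nonint[of 0] show False by simp
    qed
    have cN: "c \<le> int N" using xN unfolding c_def by (simp add: ceiling_le_iff)
    define mc where "mc = nat c"
    have mc: "real mc = real_of_int c" "mc \<in> {1..N}" using cpos cN unfolding mc_def by auto
    have xlt: "x < real mc"
    proof -
      have "x \<noteq> real mc" using nonint mc(2) by auto
      then show ?thesis using c1 mc(1) by linarith
    qed
    have memI: "s \<in> I m \<longleftrightarrow> m = mc" if m: "m \<in> {1..N}" for m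
    proof -
      have "s \<in> I m \<longleftrightarrow> real m - 1 \<le> x \<and> x \<le> real m"
        unfolding I_def b_def x_def using t Nr m by (auto simp: field_simps of_nat_diff)
      also have "\<dots> \<longleftrightarrow> m = mc"
      proof
        assume h: "real m - 1 \<le> x \<and> x \<le> real m"
        have "x \<noteq> real m" using nonint m by auto
        then have "x < real m" using h by simp
        have "m - 1 \<le> N" using m by auto
        then have "x \<noteq> real (m - 1)" by (rule nonint)
        moreover have "real (m - 1) = real m - 1" using m by (simp add: of_nat_diff)
        ultimately have "real m - 1 < x" using h by auto
        then show "m = mc" using \<open>x < real m\<close> c1 mc(1) xlt by linarith
      qed (use c1 mc(1) xlt in auto)
      finally show ?thesis .
    qed
    have "(\<Sum>m=1..N. if s \<in> I m then f (b m) else 0) = (\<Sum>m=1..N. if m = mc then f (b m) else 0)"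
      by (intro sum.cong refl) (simp add: memI)
    also have "\<dots> = f (b mc)" using mc(2) by (simp add: sum.delta')
    also have "b mc = t * real_of_int \<lceil>real N * s / t\<rceil> / real N"
      unfolding b_def mc(1) c_def x_def by simp
    finally show "f (t * real_of_int \<lceil>real N * s / t\<rceil> / real N) =
        (\<Sum>m = 1..N. if s \<in> I m then f (b m) else 0)" by simp
  qed
qed

lemma ceil_grid_bounds:
  assumes t: "t > 0" and N: "N > (0::nat)" and s: "s \<in> {0..t}"
  shows "s \<le> t * real_of_int \<lceil>real N * s / t\<rceil> / real N"
    and "t * real_of_int \<lceil>real N * s / t\<rceil> / real N \<le> s + t / real N"
    and "t * real_of_int \<lceil>real N * s / t\<rceil> / real N \<le> t"
proof -
  have Nr: "real N > 0" using N by simp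
  define x where "x = real N * s / t"
  have x1: "x \<le> real_of_int \<lceil>x\<rceil>" "real_of_int \<lceil>x\<rceil> < x + 1" by linarith+
  have xN: "x \<le> real N" using s t Nr unfolding x_def by (auto simp: field_simps)
  have cN: "real_of_int \<lceil>x\<rceil> \<le> real N"
  proof -
    have "\<lceil>x\<rceil> \<le> int N" using xN by (simp add: ceiling_le_iff)
    then show ?thesis by linarith
  qed
  have sx: "s = t * x / real N" unfolding x_def using t Nr by (simp add: field_simps)
  show "s \<le> t * real_of_int \<lceil>real N * s / t\<rceil> / real N"
    unfolding x_def[symmetric] using x1 t Nr sx
    by (simp add: divide_right_mono mult_left_mono)
  show "t * real_of_int \<lceil>real N * s / t\<rceil> / real N \<le> s + t / real N"
  proof -
    have "t * real_of_int \<lceil>x\<rceil> \<le> t * (x + 1)" using x1 t by (intro mult_left_mono) auto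
    then have "t * real_of_int \<lceil>x\<rceil> / real N \<le> t * (x + 1) / real N" using Nr by (simp add: divide_right_mono)
    then show ?thesis unfolding x_def[symmetric] using sx by (simp add: distrib_left add_divide_distrib)
  qed
  show "t * real_of_int \<lceil>real N * s / t\<rceil> / real N \<le> t"
    unfolding x_def[symmetric] using cN t Nr by (simp add: field_simps)
qed

lemma riemann_right_limit:
  fixes f :: "real \<Rightarrow> 'b::euclidean_space"
  assumes t: "t > 0"
    and rc: "\<And>s. s \<in> {0..t} \<Longrightarrow> (f \<longlongrightarrow> f s) (at_right s)"
    and bnd: "\<And>s. s \<in> {0..t} \<Longrightarrow> norm (f s) \<le> B"
  shows "f integrable_on {0..t}"
    and "(\<lambda>n. (t / real (Suc n)) *\<^sub>R (\<Sum>m=1..Suc n. f (real m * t / real (Suc n)))) \<longlonglongrightarrow> integral {0..t} f"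
proof -
  define r where "r n s = t * real_of_int \<lceil>real (Suc n) * s / t\<rceil> / real (Suc n)" for n s
  have rb: "s \<le> r n s" "r n s \<le> s + t / real (Suc n)" "r n s \<le> t" if "s \<in> {0..t}" for n s
    using ceil_grid_bounds[OF t _ that, of "Suc n"] unfolding r_def by auto
  have hi: "((\<lambda>s. f (r n s)) has_integral (t / real (Suc n)) *\<^sub>R (\<Sum>m=1..Suc n. f (real m * t / real (Suc n)))) {0..t}" for n
    unfolding r_def by (rule step_has_integral[OF t]) simp
  have int: "(\<lambda>s. f (r n s)) integrable_on {0..t}" for n using hi by blast
  have le: "norm (f (r n s)) \<le> B" if "s \<in> {0..t}" for n s
    using rb[OF that, of n] that by (intro bnd) auto
  have conv: "(\<lambda>n. f (r n s)) \<longlonglongrightarrow> f s" if s: "s \<in> {0..t}" for s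
    unfolding tendsto_iff
  proof (intro allI impI)
    fix e :: real assume e: "e > 0"
    from rc[OF s] e have "eventually (\<lambda>y. dist (f y) (f s) < e) (at_right s)"
      by (simp add: tendsto_iff)
    then obtain b where b: "b > s" "\<And>y. y > s \<Longrightarrow> y < b \<Longrightarrow> dist (f y) (f s) < e"
      unfolding eventually_at_right_field by blast
    have "eventually (\<lambda>n. t / real (Suc n) < b - s) sequentially"
    proof -
      have "(\<lambda>n. t / real (Suc n)) \<longlonglongrightarrow> 0"
        using LIMSEQ_Suc[OF lim_const_over_n[of t]] by simp
      then show ?thesis using b(1) by (simp add: order_tendsto_iff)
    qed
    then show "eventually (\<lambda>n. dist (f (r n s)) (f s) < e) sequentially"
    proof eventually_elim
      case (elim n)
      show ?case
      proof (cases "r n s = s")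
        case True then show ?thesis using e by simp
      next
        case False
        then have "r n s > s" using rb[OF s, of n] by simp
        moreover have "r n s < b" using rb[OF s, of n] elim by simp
        ultimately show ?thesis by (rule b(2))
      qed
    qed
  qed
  have hint: "(\<lambda>s. B) integrable_on {0..t}" by (intro integrable_continuous_interval continuous_intros)
  note dc = dominated_convergence[of "\<lambda>n s. f (r n s)" "{0..t}" "\<lambda>s. B" f, OF int hint le conv]
  show "f integrable_on {0..t}" by (rule dc(1))
  show "(\<lambda>n. (t / real (Suc n)) *\<^sub>R (\<Sum>m=1..Suc n. f (real m * t / real (Suc n)))) \<longlonglongrightarrow> integral {0..t} f"
  proof -
    have eq: "integral {0..t} (\<lambda>s. f (r n s)) = (t / real (Suc n)) *\<^sub>R (\<Sum>m=1..Suc n. f (real m * t / real (Suc n)))" for n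
      using hi by (rule integral_unique)
    show ?thesis using dc(2) unfolding eq .
  qed
qed

lemma cadlag_local_bound:
  assumes cp: "cadlag_path p" and s: "s \<ge> 0"
  shows "\<exists>d>0. \<exists>b. \<forall>y. y \<ge> 0 \<and> \<bar>y - s\<bar> < d \<longrightarrow> \<bar>p y\<bar> \<le> b"
proof -
  have rc: "(p \<longlongrightarrow> p s) (at_right s)" using cp s unfolding cadlag_path_def by auto
  then have "eventually (\<lambda>y. dist (p y) (p s) < 1) (at_right s)" by (simp add: tendsto_iff)
  then obtain br where br: "br > s" "\<And>y. y > s \<Longrightarrow> y < br \<Longrightarrow> dist (p y) (p s) < 1"
    unfolding eventually_at_right_field by blast
  show ?thesis
  proof (cases "s = 0")
    case True
    show ?thesis
    proof (intro exI conjI allI impI)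
      show "br - s > 0" using br by simp
      fix y assume y: "y \<ge> 0 \<and> \<bar>y - s\<bar> < br - s"
      show "\<bar>p y\<bar> \<le> \<bar>p s\<bar> + 1"
      proof (cases "y = s")
        case False
        then have "y > s" using y True by simp
        then have "dist (p y) (p s) < 1" using br y by auto
        then show ?thesis by (simp add: dist_real_def)
      qed simp
    qed
  next
    case False
    then have spos: "s > 0" using s by simp
    then obtain l where "(p \<longlongrightarrow> l) (at_left s)" using cp unfolding cadlag_path_def by blast
    then have "eventually (\<lambda>y. dist (p y) l < 1) (at_left s)" by (simp add: tendsto_iff)
    then obtain bl where bl: "bl < s" "\<And>y. y > bl \<Longrightarrow> y < s \<Longrightarrow> dist (p y) l < 1"
      unfolding eventually_at_left_field by blast
    show ?thesis
    proof (intro exI conjI allI impI)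
      show "min (br - s) (s - bl) > 0" using br bl by simp
      fix y assume y: "y \<ge> 0 \<and> \<bar>y - s\<bar> < min (br - s) (s - bl)"
      show "\<bar>p y\<bar> \<le> \<bar>p s\<bar> + \<bar>l\<bar> + 1"
      proof (cases y s rule: linorder_cases)
        case less
        then have "dist (p y) l < 1" using bl y by auto
        then show ?thesis by (simp add: dist_real_def)
      next
        case greater
        then have "dist (p y) (p s) < 1" using br y by auto
        then show ?thesis by (simp add: dist_real_def)
      qed simp
    qed
  qed
qed

lemma cadlag_bounded:
  assumes cp: "cadlag_path p"
  shows "\<exists>B. \<forall>s\<in>{0..t}. \<bar>p s\<bar> \<le> B"
proof -
  have "\<forall>s\<in>{0..t}. \<exists>d>0. \<exists>b. \<forall>y. y \<ge> 0 \<and> \<bar>y - s\<bar> < d \<longrightarrow> \<bar>p y\<bar> \<le> b"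
    using cadlag_local_bound[OF cp] by auto
  then obtain d b where db: "\<And>s. s \<in> {0..t} \<Longrightarrow> d s > 0"
    "\<And>s y. s \<in> {0..t} \<Longrightarrow> y \<ge> 0 \<Longrightarrow> \<bar>y - s\<bar> < d s \<Longrightarrow> \<bar>p y\<bar> \<le> b s"
    by metis
  have cov: "{0..t} \<subseteq> (\<Union>s\<in>{0..t}. ball s (d s))"
    using db(1) by force
  obtain C where C: "C \<subseteq> {0..t}" "finite C" "{0..t} \<subseteq> (\<Union>s\<in>C. ball s (d s))"
    by (rule compactE_image[OF compact_Icc _ cov]) auto
  show ?thesis
  proof (intro exI ballI)
    fix y assume y: "y \<in> {0..t}"
    then obtain s where s: "s \<in> C" "y \<in> ball s (d s)" using C(3) by blast
    then have "\<bar>p y\<bar> \<le> b s" using db(2)[of s y] C(1) y by (auto simp: dist_real_def)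
    also have "\<dots> \<le> Max (b ` C)" using C(2) s(1) by (intro Max_ge) auto
    finally show "\<bar>p y\<bar> \<le> Max (b ` C)" .
  qed
qed

lemma gcp_basic:
  assumes G: "is_GCP M k lam X"
  shows "prob_space M" and "\<And>t. t \<ge> 0 \<Longrightarrow> X t \<in> measurable M (count_space UNIV)"
    and "\<And>t. t \<ge> 0 \<Longrightarrow> (\<lambda>\<omega>. real (X t \<omega>)) \<in> borel_measurable M"
proof -
  show "prob_space M" using G unfolding is_GCP_def by auto
  show m: "\<And>t. t \<ge> 0 \<Longrightarrow> X t \<in> measurable M (count_space UNIV)" using G unfolding is_GCP_def by auto
  show "\<And>t. t \<ge> 0 \<Longrightarrow> (\<lambda>\<omega>. real (X t \<omega>)) \<in> borel_measurable M"
    by (rule measurable_compose[OF m]) auto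
qed

lemma gcp_pgf:
  assumes G: "is_GCP M k lam X" and h: "h \<ge> 0" and z: "norm z \<le> 1"
  shows "(\<integral>\<omega>. z ^ X h \<omega> \<partial>M) = exp (complex_of_real h * (\<Sum>j=1..k. complex_of_real (lam j) * (z ^ j - 1)))"
proof (rule pgf_extend[OF gcp_basic(1)[OF G] gcp_basic(2)[OF G h] _ _ z])
  show "(\<lambda>z. exp (complex_of_real h * (\<Sum>j = 1..k. complex_of_real (lam j) * (z ^ j - 1)))) holomorphic_on UNIV"
    by (intro holomorphic_intros)
  fix u :: real assume u: "\<bar>u\<bar> \<le> 1"
  have "(\<integral>\<omega>. u ^ X h \<omega> \<partial>M) = exp (h * (\<Sum>j=1..k. lam j * (u ^ j - 1)))"
    using G h u unfolding is_GCP_def by auto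
  then show "complex_of_real (\<integral>\<omega>. u ^ X h \<omega> \<partial>M) =
      exp (complex_of_real h * (\<Sum>j = 1..k. complex_of_real (lam j) * (complex_of_real u ^ j - 1)))"
    by (simp add: exp_of_real[symmetric])
qed

lemma iexp_nat_power: "iexp (a * real n) = iexp a ^ n"
proof -
  have "iexp (a * real n) = exp (of_nat n * (\<i> * complex_of_real a))"
    by (simp add: algebra_simps)
  also have "\<dots> = iexp a ^ n" by (rule exp_of_nat_mult)
  finally show ?thesis .
qed

lemma norm_iexp [simp]: "norm (iexp a) = 1"
  by simp

lemma gcp_incr_char:
  assumes G: "is_GCP M k lam X" and s: "s \<ge> 0" and h: "h \<ge> 0"
  shows "(\<integral>\<omega>. iexp (a * (real (X (s + h) \<omega>) - real (X s \<omega>))) \<partial>M)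
       = exp (complex_of_real h * (\<Sum>j=1..k. complex_of_real (lam j) * (iexp (a * real j) - 1)))"
proof -
  have st: "distr M borel (\<lambda>\<omega>. real (X (s + h) \<omega>) - real (X s \<omega>)) = distr M borel (\<lambda>\<omega>. real (X h \<omega>))"
    using G s h unfolding is_GCP_def by auto
  have m1: "(\<lambda>\<omega>. real (X (s + h) \<omega>) - real (X s \<omega>)) \<in> borel_measurable M"
    using gcp_basic(3)[OF G, of "s + h"] gcp_basic(3)[OF G, of s] s h by (intro borel_measurable_diff) auto
  have m2: "(\<lambda>\<omega>. real (X h \<omega>)) \<in> borel_measurable M"
    using gcp_basic(3)[OF G h] .
  have "(\<integral>\<omega>. iexp (a * (real (X (s + h) \<omega>) - real (X s \<omega>))) \<partial>M)
      = (\<integral>x. iexp (a * x) \<partial>distr M borel (\<lambda>\<omega>. real (X (s + h) \<omega>) - real (X s \<omega>)))"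
    using m1 by (subst integral_distr) auto
  also have "\<dots> = (\<integral>x. iexp (a * x) \<partial>distr M borel (\<lambda>\<omega>. real (X h \<omega>)))" by (simp add: st)
  also have "\<dots> = (\<integral>\<omega>. iexp (a * real (X h \<omega>)) \<partial>M)"
    using m2 by (subst integral_distr) auto
  also have "\<dots> = (\<integral>\<omega>. iexp a ^ X h \<omega> \<partial>M)" by (simp only: iexp_nat_power)
  also have "\<dots> = exp (complex_of_real h * (\<Sum>j=1..k. complex_of_real (lam j) * (iexp a ^ j - 1)))"
    by (rule gcp_pgf[OF G h]) simp
  also have "\<dots> = exp (complex_of_real h * (\<Sum>j=1..k. complex_of_real (lam j) * (iexp (a * real j) - 1)))"
    by (simp only: iexp_nat_power)
  finally show ?thesis .
qed

lemma telescope_weights: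
  fixes d :: "nat \<Rightarrow> real"
  shows "(\<Sum>m=1..N. \<Sum>i<m. d i) = (\<Sum>i<N. (real N - real i) * d i)"
proof (induction N)
  case 0 then show ?case by simp
next
  case (Suc N)
  have "(\<Sum>m=1..Suc N. \<Sum>i<m. d i) = (\<Sum>m=1..N. \<Sum>i<m. d i) + (\<Sum>i<Suc N. d i)"
    by simp
  also have "\<dots> = (\<Sum>i<N. (real N - real i) * d i) + (\<Sum>i<Suc N. d i)" using Suc by simp
  also have "\<dots> = (\<Sum>i<Suc N. (real (Suc N) - real i) * d i)"
  proof -
    have "(\<Sum>i<Suc N. (real (Suc N) - real i) * d i) = (\<Sum>i<Suc N. (real N - real i) * d i + d i)"
      by (intro sum.cong refl) (simp add: algebra_simps)
    also have "\<dots> = (\<Sum>i<Suc N. (real N - real i) * d i) + (\<Sum>i<Suc N. d i)"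
      by (rule sum.distrib)
    also have "(\<Sum>i<Suc N. (real N - real i) * d i) = (\<Sum>i<N. (real N - real i) * d i)"
      by simp
    finally show ?thesis by simp
  qed
  finally show ?case .
qed

lemma reindex_rev:
  fixes F :: "nat \<Rightarrow> 'a::comm_monoid_add"
  shows "(\<Sum>i<N. F (N - i)) = (\<Sum>m=1..N. F m)"
  by (rule sum.reindex_bij_witness[where i="\<lambda>m. N - m" and j="\<lambda>i. N - i"]) auto

lemma gcp_riemann_char:
  assumes G: "is_GCP M k lam X" and t: "t > 0" and N: "N > (0::nat)"
  shows "(\<integral>\<omega>. iexp (a * ((1 / real N) * (\<Sum>m=1..N. real (X (real m * t / real N) \<omega>)))) \<partial>M)
       = exp (complex_of_real (t / real N) * (\<Sum>m=1..N. \<Sum>j=1..k. complex_of_real (lam j) *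
              (iexp (a * (real m * real j / real N)) - 1)))"
proof -
  interpret prob_space M using gcp_basic(1)[OF G] .
  have Nr: "real N > 0" using N by simp
  define \<tau> where "\<tau> i = real i * t / real N" for i :: nat
  define d where "d i \<omega> = real (X (\<tau> (Suc i)) \<omega>) - real (X (\<tau> i) \<omega>)" for i \<omega>
  define c where "c i = (real N - real i) / real N" for i :: nat
  have \<tau>0: "\<tau> i \<ge> 0" for i unfolding \<tau>_def using t Nr by simp
  have \<tau>mono: "\<tau> i \<le> \<tau> (Suc i)" for i unfolding \<tau>_def using t Nr by (simp add: divide_right_mono)
  have \<tau>S: "\<tau> (Suc i) = \<tau> i + t / real N" for i unfolding \<tau>_def by (simp add: distrib_right add_divide_distrib)
  have X0: "X 0 \<omega> = 0" if "\<omega> \<in> space M" for \<omega> using G that unfolding is_GCP_def by auto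
  have ind: "indep_vars (\<lambda>_. borel) d {..<N}"
  proof -
    have "\<forall>(n::nat) (\<tau>::nat \<Rightarrow> real). 0 \<le> \<tau> 0 \<and> (\<forall>i<n. \<tau> i \<le> \<tau> (Suc i)) \<longrightarrow>
        indep_vars (\<lambda>_. borel) (\<lambda>i \<omega>. real (X (\<tau> (Suc i)) \<omega>) - real (X (\<tau> i) \<omega>)) {..<n}"
      using G unfolding is_GCP_def by blast
    then show ?thesis unfolding d_def using \<tau>0 \<tau>mono by blast
  qed
  have rewrite: "iexp (a * ((1 / real N) * (\<Sum>m=1..N. real (X (real m * t / real N) \<omega>))))
      = (\<Prod>i<N. iexp (a * c i * d i \<omega>))" if w: "\<omega> \<in> space M" for \<omega>
  proof -
    have "(\<Sum>m=1..N. real (X (real m * t / real N) \<omega>)) = (\<Sum>m=1..N. \<Sum>i<m. d i \<omega>)"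
    proof (intro sum.cong refl)
      fix m
      have "(\<Sum>i<m. d i \<omega>) = real (X (\<tau> m) \<omega>) - real (X (\<tau> 0) \<omega>)"
        unfolding d_def by (rule sum_lessThan_telescope)
      also have "\<dots> = real (X (real m * t / real N) \<omega>)" using X0[OF w] by (simp add: \<tau>_def)
      finally show "real (X (real m * t / real N) \<omega>) = (\<Sum>i<m. d i \<omega>)" by simp
    qed
    also have "\<dots> = (\<Sum>i<N. (real N - real i) * d i \<omega>)" by (rule telescope_weights)
    finally have "(1 / real N) * (\<Sum>m=1..N. real (X (real m * t / real N) \<omega>)) = (\<Sum>i<N. c i * d i \<omega>)"
      unfolding c_def by (simp add: sum_distrib_left)
    then have "iexp (a * ((1 / real N) * (\<Sum>m=1..N. real (X (real m * t / real N) \<omega>))))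
        = exp (\<Sum>i<N. \<i> * complex_of_real (a * c i * d i \<omega>))"
      by (simp add: sum_distrib_left mult.assoc)
    also have "\<dots> = (\<Prod>i<N. iexp (a * c i * d i \<omega>))" by (simp add: exp_sum)
    finally show ?thesis .
  qed
  have dm: "d i \<in> borel_measurable M" for i
    unfolding d_def using gcp_basic(3)[OF G \<tau>0] by (intro borel_measurable_diff) auto
  have "(\<integral>\<omega>. iexp (a * ((1 / real N) * (\<Sum>m=1..N. real (X (real m * t / real N) \<omega>)))) \<partial>M)
      = (\<integral>\<omega>. (\<Prod>i<N. iexp (a * c i * d i \<omega>)) \<partial>M)"
    by (rule Bochner_Integration.integral_cong[OF refl]) (rule rewrite)
  also have "\<dots> = (\<Prod>i<N. \<integral>\<omega>. iexp (a * c i * d i \<omega>) \<partial>M)"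
  proof (rule indep_vars_lebesgue_integral)
    show "indep_vars (\<lambda>_. borel) (\<lambda>i \<omega>. iexp (a * c i * d i \<omega>)) {..<N}"
      using indep_vars_compose2[OF ind, of "\<lambda>i x. iexp (a * c i * x)" "\<lambda>_. borel"] by auto
    show "\<And>i. i \<in> {..<N} \<Longrightarrow> integrable M (\<lambda>\<omega>. iexp (a * c i * d i \<omega>))"
      using dm by (intro integrable_iexp) auto
  qed simp
  also have "\<dots> = (\<Prod>i<N. exp (complex_of_real (t / real N) *
        (\<Sum>j=1..k. complex_of_real (lam j) * (iexp (a * c i * real j) - 1))))"
  proof (rule prod.cong[OF refl])
    fix i
    show "(\<integral>\<omega>. iexp (a * c i * d i \<omega>) \<partial>M) = exp (complex_of_real (t / real N) *
        (\<Sum>j=1..k. complex_of_real (lam j) * (iexp (a * c i * real j) - 1)))"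
      using gcp_incr_char[OF G \<tau>0[of i], of "t / real N" "a * c i"] t Nr
      unfolding d_def \<tau>S[symmetric] by simp
  qed
  also have "\<dots> = exp (\<Sum>i<N. complex_of_real (t / real N) *
        (\<Sum>j=1..k. complex_of_real (lam j) * (iexp (a * c i * real j) - 1)))"
    by (simp add: exp_sum)
  also have "(\<Sum>i<N. complex_of_real (t / real N) *
        (\<Sum>j=1..k. complex_of_real (lam j) * (iexp (a * c i * real j) - 1)))
      = complex_of_real (t / real N) * (\<Sum>m=1..N. \<Sum>j=1..k. complex_of_real (lam j) *
              (iexp (a * (real m * real j / real N)) - 1))"
  proof -
    have "(\<Sum>i<N. (\<Sum>j=1..k. complex_of_real (lam j) * (iexp (a * c i * real j) - 1)))
        = (\<Sum>i<N. (\<Sum>j=1..k. complex_of_real (lam j) * (iexp (a * (real (N - i) * real j / real N)) - 1)))"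
    proof (rule sum.cong[OF refl])
      fix i assume i: "i \<in> {..<N}"
      have "c i = real (N - i) / real N" using i unfolding c_def by (simp add: of_nat_diff)
      then show "(\<Sum>j=1..k. complex_of_real (lam j) * (iexp (a * c i * real j) - 1))
          = (\<Sum>j=1..k. complex_of_real (lam j) * (iexp (a * (real (N - i) * real j / real N)) - 1))"
        by (simp add: algebra_simps)
    qed
    also have "\<dots> = (\<Sum>m=1..N. \<Sum>j=1..k. complex_of_real (lam j) * (iexp (a * (real m * real j / real N)) - 1))"
      using reindex_rev[of "\<lambda>m. \<Sum>j=1..k. complex_of_real (lam j) * (iexp (a * (real m * real j / real N)) - 1)" N] by simp
    finally have eq: "(\<Sum>i<N. (\<Sum>j=1..k. complex_of_real (lam j) * (iexp (a * c i * real j) - 1))) = (\<Sum>m=1..N. \<Sum>j=1..k. complex_of_real (lam j) * (iexp (a * (real m * real j / real N)) - 1))" .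
    show ?thesis by (simp only: sum_distrib_left[symmetric] eq)
  qed
  finally show ?thesis .
qed

definition Aint :: "real \<Rightarrow> nat \<Rightarrow> complex" where
  "Aint a j = integral {0..real j} (\<lambda>x. iexp (a * x))"

lemma riemann_iexp:
  assumes j: "j \<ge> (1::nat)"
  shows "(\<lambda>n. complex_of_real (1 / real (Suc n)) * (\<Sum>m=1..Suc n. iexp (a * (real m * real j / real (Suc n)))))
     \<longlonglongrightarrow> complex_of_real (1 / real j) * Aint a j"
proof -
  have jr: "real j > 0" using j by simp
  have "(\<lambda>n. (real j / real (Suc n)) *\<^sub>R (\<Sum>m=1..Suc n. (\<lambda>x. iexp (a * x)) (real m * real j / real (Suc n))))
      \<longlonglongrightarrow> integral {0..real j} (\<lambda>x. iexp (a * x))"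
  proof (rule riemann_right_limit(2)[OF jr, where B=1])
    fix s show "((\<lambda>x. iexp (a * x)) \<longlongrightarrow> iexp (a * s)) (at_right s)"
      by (intro tendsto_intros)
  next
    fix s show "norm (iexp (a * s)) \<le> 1" by simp
  qed
  then have "(\<lambda>n. complex_of_real (1 / real j) * ((real j / real (Suc n)) *\<^sub>R (\<Sum>m=1..Suc n. iexp (a * (real m * real j / real (Suc n))))))
      \<longlonglongrightarrow> complex_of_real (1 / real j) * Aint a j"
    unfolding Aint_def by (intro tendsto_mult tendsto_const) simp
  moreover have "complex_of_real (1 / real j) * ((real j / real (Suc n)) *\<^sub>R S) = complex_of_real (1 / real (Suc n)) * S" for n S
    using jr by (simp add: scaleR_conv_of_real field_simps)
  ultimately show ?thesis by simp
qed

lemma expo_rewrite: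
  fixes lam :: "nat \<Rightarrow> real"
  assumes N: "N > 0"
  shows "complex_of_real (t / real N) * (\<Sum>m=1..N. \<Sum>j=1..k. complex_of_real (lam j) * (e m j - 1))
    = complex_of_real t * (\<Sum>j=1..k. complex_of_real (lam j) * (complex_of_real (1 / real N) * (\<Sum>m=1..N. e m j) - 1))"
proof -
  have "(\<Sum>m=1..N. \<Sum>j=1..k. complex_of_real (lam j) * (e m j - 1))
      = (\<Sum>j=1..k. \<Sum>m=1..N. complex_of_real (lam j) * (e m j - 1))" by (rule sum.swap)
  also have "\<dots> = (\<Sum>j=1..k. complex_of_real (lam j) * ((\<Sum>m=1..N. e m j) - of_nat N))"
    by (simp add: sum_distrib_left[symmetric] sum_subtractf)
  finally have *: "(\<Sum>m=1..N. \<Sum>j=1..k. complex_of_real (lam j) * (e m j - 1))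
      = (\<Sum>j=1..k. complex_of_real (lam j) * ((\<Sum>m=1..N. e m j) - of_nat N))" .
  show ?thesis unfolding * using N
    by (simp add: sum_distrib_left field_simps diff_divide_distrib sum_divide_distrib)
qed

lemma expo_limit:
  fixes lam :: "nat \<Rightarrow> real"
  shows "(\<lambda>n. complex_of_real (t / real (Suc n)) * (\<Sum>m=1..Suc n. \<Sum>j=1..k. complex_of_real (lam j) *
              (iexp (a * (real m * real j / real (Suc n))) - 1)))
     \<longlonglongrightarrow> complex_of_real t * (\<Sum>j=1..k. complex_of_real (lam j) * (complex_of_real (1 / real j) * Aint a j - 1))"
proof -
  have "(\<lambda>n. complex_of_real t * (\<Sum>j=1..k. complex_of_real (lam j) * (complex_of_real (1 / real (Suc n)) *
          (\<Sum>m=1..Suc n. iexp (a * (real m * real j / real (Suc n)))) - 1)))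
     \<longlonglongrightarrow> complex_of_real t * (\<Sum>j=1..k. complex_of_real (lam j) * (complex_of_real (1 / real j) * Aint a j - 1))"
    by (intro tendsto_intros riemann_iexp) auto
  moreover have "complex_of_real (t / real (Suc n)) * (\<Sum>m=1..Suc n. \<Sum>j=1..k. complex_of_real (lam j) *
              (iexp (a * (real m * real j / real (Suc n))) - 1))
     = complex_of_real t * (\<Sum>j=1..k. complex_of_real (lam j) * (complex_of_real (1 / real (Suc n)) *
          (\<Sum>m=1..Suc n. iexp (a * (real m * real j / real (Suc n)))) - 1))" for n
    by (rule expo_rewrite[where e="\<lambda>m j. iexp (a * (real m * real j / real (Suc n)))"]) simp
  ultimately show ?thesis by simp
qed

lemma path_of_eval: "s \<ge> 0 \<Longrightarrow> path_of X \<omega> s = X s \<omega>"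
  unfolding path_of_def by simp

lemma pathfun_measurable:
  assumes s: "\<And>m. m \<in> A \<Longrightarrow> s m \<ge> 0"
  shows "(\<lambda>p. iexp (a * (c * (\<Sum>m\<in>A. real (p (s m)))))) \<in> borel_measurable (Pi\<^sub>M {0::real..} (\<lambda>_. count_space (UNIV::nat set)))"
proof -
  have comp: "(\<lambda>p. real (p (s m))) \<in> borel_measurable (Pi\<^sub>M {0::real..} (\<lambda>_. count_space (UNIV::nat set)))"
    if "m \<in> A" for m
    by (rule measurable_compose[OF measurable_component_singleton]) (use s that in auto)
  show ?thesis using comp by measurable
qed

lemma gsp_char:
  assumes gsp: "is_GSP_pair M k lam mu M1 M2" and t: "t > 0"
  shows "time_avg (GSP M1 M2) t \<in> borel_measurable M"
    and "char (distr M borel (time_avg (GSP M1 M2) t)) \<theta> =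
       exp (complex_of_real t * (\<Sum>j=1..k. complex_of_real (lam j) * (complex_of_real (1 / real j) * Aint \<theta> j - 1)))
     * exp (complex_of_real t * (\<Sum>j=1..k. complex_of_real (mu j) * (complex_of_real (1 / real j) * Aint (-\<theta>) j - 1)))"
proof -
  have G1: "is_GCP M k lam M1" and G2: "is_GCP M k mu M2"
    and ind: "indep_rv M
       (Pi\<^sub>M {0::real..} (\<lambda>_. count_space (UNIV::nat set))) (path_of M1)
       (Pi\<^sub>M {0::real..} (\<lambda>_. count_space (UNIV::nat set))) (path_of M2)"
    using gsp unfolding is_GSP_pair_def by auto
  interpret prob_space M using gcp_basic(1)[OF G1] .
  define TA where "TA = time_avg (GSP M1 M2) t"
  define S1 where "S1 n \<omega> = (1 / real (Suc n)) * (\<Sum>m=1..Suc n. real (M1 (real m * t / real (Suc n)) \<omega>))" for n \<omega>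
  define S2 where "S2 n \<omega> = (1 / real (Suc n)) * (\<Sum>m=1..Suc n. real (M2 (real m * t / real (Suc n)) \<omega>))" for n \<omega>
  define R where "R n \<omega> = S1 n \<omega> - S2 n \<omega>" for n \<omega>
  have grid: "real m * t / real (Suc n) \<ge> 0" for m n using t by simp
  have S1m: "S1 n \<in> borel_measurable M" for n
    unfolding S1_def using gcp_basic(3)[OF G1 grid] by measurable
  have S2m: "S2 n \<in> borel_measurable M" for n
    unfolding S2_def using gcp_basic(3)[OF G2 grid] by measurable
  have Rm: "R n \<in> borel_measurable M" for n unfolding R_def using S1m S2m by measurable
  have lim: "(\<lambda>n. R n \<omega>) \<longlonglongrightarrow> TA \<omega>" if w: "\<omega> \<in> space M" for \<omega>
  proof -
    define p where "p s = real (M1 s \<omega>) - real (M2 s \<omega>)" for s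
    have c1: "cadlag_path (\<lambda>s. real (M1 s \<omega>))" using G1 w unfolding is_GCP_def by auto
    have c2: "cadlag_path (\<lambda>s. real (M2 s \<omega>))" using G2 w unfolding is_GCP_def by auto
    obtain B1 where B1: "\<And>s. s \<in> {0..t} \<Longrightarrow> \<bar>real (M1 s \<omega>)\<bar> \<le> B1" using cadlag_bounded[OF c1, of t] by blast
    obtain B2 where B2: "\<And>s. s \<in> {0..t} \<Longrightarrow> \<bar>real (M2 s \<omega>)\<bar> \<le> B2" using cadlag_bounded[OF c2, of t] by blast
    have "(\<lambda>n. (t / real (Suc n)) *\<^sub>R (\<Sum>m=1..Suc n. p (real m * t / real (Suc n)))) \<longlonglongrightarrow> integral {0..t} p"
    proof (rule riemann_right_limit(2)[OF t, where B="B1 + B2"])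
      fix s assume s: "s \<in> {0..t}"
      have "((\<lambda>s. real (M1 s \<omega>)) \<longlongrightarrow> real (M1 s \<omega>)) (at_right s)" using c1 s unfolding cadlag_path_def by auto
      moreover have "((\<lambda>s. real (M2 s \<omega>)) \<longlongrightarrow> real (M2 s \<omega>)) (at_right s)" using c2 s unfolding cadlag_path_def by auto
      ultimately show "(p \<longlongrightarrow> p s) (at_right s)" unfolding p_def by (intro tendsto_diff)
      show "norm (p s) \<le> B1 + B2" using B1[OF s] B2[OF s] unfolding p_def by simp
    qed
    then have "(\<lambda>n. (1 / t) * ((t / real (Suc n)) *\<^sub>R (\<Sum>m=1..Suc n. p (real m * t / real (Suc n))))) \<longlonglongrightarrow> (1 / t) * integral {0..t} p"
      by (intro tendsto_mult_left)
    moreover have "(1 / t) * integral {0..t} p = TA \<omega>"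
      unfolding TA_def time_avg_def GSP_def p_def by simp
    moreover have "(1 / t) * ((t / real (Suc n)) *\<^sub>R (\<Sum>m=1..Suc n. p (real m * t / real (Suc n)))) = R n \<omega>" for n
    proof -
      have alg: "(1 / t) * ((t / N') *\<^sub>R (X - Y)) = (1 / N') * X - (1 / N') * Y" for X Y N' :: real
        using t by (cases "N' = 0") (simp_all add: field_simps)
      show ?thesis unfolding R_def S1_def S2_def p_def sum_subtractf alg ..
    qed
    ultimately show ?thesis by simp
  qed
  show TAm: "time_avg (GSP M1 M2) t \<in> borel_measurable M"
    unfolding TA_def[symmetric] by (rule borel_measurable_LIMSEQ_metric[OF Rm lim])
  have conv: "(\<lambda>n. \<integral>\<omega>. iexp (\<theta> * R n \<omega>) \<partial>M) \<longlonglongrightarrow> (\<integral>\<omega>. iexp (\<theta> * TA \<omega>) \<partial>M)"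
  proof (rule integral_dominated_convergence[where w="\<lambda>_. 1"])
    show "(\<lambda>\<omega>. iexp (\<theta> * TA \<omega>)) \<in> borel_measurable M" using TAm unfolding TA_def[symmetric] by measurable
    show "(\<lambda>\<omega>. iexp (\<theta> * R n \<omega>)) \<in> borel_measurable M" for n using Rm[of n] by measurable
    show "AE \<omega> in M. (\<lambda>n. iexp (\<theta> * R n \<omega>)) \<longlonglongrightarrow> iexp (\<theta> * TA \<omega>)"
      using lim by (intro AE_I2) (auto intro!: tendsto_intros)
    show "AE \<omega> in M. norm (iexp (\<theta> * R n \<omega>)) \<le> 1" for n by simp
  qed simp
  have int: "integrable M (\<lambda>\<omega>. iexp (a * f \<omega>))" if "f \<in> borel_measurable M" for a f
    using integrable_iexp[of "\<lambda>\<omega>. complex_of_real (a * f \<omega>)"] that by auto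
  have fact: "(\<integral>\<omega>. iexp (\<theta> * R n \<omega>) \<partial>M) = (\<integral>\<omega>. iexp (\<theta> * S1 n \<omega>) \<partial>M) * (\<integral>\<omega>. iexp ((-\<theta>) * S2 n \<omega>) \<partial>M)" for n
  proof -
    define F1 where "F1 p = iexp (\<theta> * ((1 / real (Suc n)) * (\<Sum>m=1..Suc n. real (p (real m * t / real (Suc n))))))" for p :: "real \<Rightarrow> nat"
    define F2 where "F2 p = iexp ((-\<theta>) * ((1 / real (Suc n)) * (\<Sum>m=1..Suc n. real (p (real m * t / real (Suc n))))))" for p :: "real \<Rightarrow> nat"
    have F1m: "F1 \<in> borel_measurable (Pi\<^sub>M {0::real..} (\<lambda>_. count_space (UNIV::nat set)))"
      unfolding F1_def by (rule pathfun_measurable) (use grid in auto)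
    have F2m: "F2 \<in> borel_measurable (Pi\<^sub>M {0::real..} (\<lambda>_. count_space (UNIV::nat set)))"
      unfolding F2_def by (rule pathfun_measurable) (use grid in auto)
    have e1: "(\<lambda>\<omega>. F1 (path_of M1 \<omega>)) = (\<lambda>\<omega>. iexp (\<theta> * S1 n \<omega>))"
      unfolding F1_def S1_def using grid by (simp add: path_of_eval)
    have e2: "(\<lambda>\<omega>. F2 (path_of M2 \<omega>)) = (\<lambda>\<omega>. iexp ((-\<theta>) * S2 n \<omega>))"
      unfolding F2_def S2_def using grid by (simp add: path_of_eval)
    have iv: "indep_var borel (\<lambda>\<omega>. iexp (\<theta> * S1 n \<omega>)) borel (\<lambda>\<omega>. iexp ((-\<theta>) * S2 n \<omega>))"
      using indep_rv_compose[OF prob_space_axioms ind F1m F2m] unfolding e1 e2 .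
    have "(\<integral>\<omega>. iexp (\<theta> * R n \<omega>) \<partial>M) = (\<integral>\<omega>. iexp (\<theta> * S1 n \<omega>) * iexp ((-\<theta>) * S2 n \<omega>) \<partial>M)"
      unfolding R_def by (intro Bochner_Integration.integral_cong refl)
        (simp add: algebra_simps exp_diff exp_minus divide_inverse)
    also have "\<dots> = (\<integral>\<omega>. iexp (\<theta> * S1 n \<omega>) \<partial>M) * (\<integral>\<omega>. iexp ((-\<theta>) * S2 n \<omega>) \<partial>M)"
      by (rule indep_var_lebesgue_integral[OF iv]) (rule int S1m S2m)+
    finally show ?thesis .
  qed
  have c1: "(\<integral>\<omega>. iexp (\<theta> * S1 n \<omega>) \<partial>M) = exp (complex_of_real (t / real (Suc n)) * (\<Sum>m=1..Suc n. \<Sum>j=1..k. complex_of_real (lam j) *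
              (iexp (\<theta> * (real m * real j / real (Suc n))) - 1)))" for n
    unfolding S1_def by (rule gcp_riemann_char[OF G1 t]) simp
  have c2: "(\<integral>\<omega>. iexp ((-\<theta>) * S2 n \<omega>) \<partial>M) = exp (complex_of_real (t / real (Suc n)) * (\<Sum>m=1..Suc n. \<Sum>j=1..k. complex_of_real (mu j) *
              (iexp ((-\<theta>) * (real m * real j / real (Suc n))) - 1)))" for n
    unfolding S2_def by (rule gcp_riemann_char[OF G2 t]) simp
  have "(\<lambda>n. \<integral>\<omega>. iexp (\<theta> * R n \<omega>) \<partial>M) \<longlonglongrightarrow>
       exp (complex_of_real t * (\<Sum>j=1..k. complex_of_real (lam j) * (complex_of_real (1 / real j) * Aint \<theta> j - 1)))
     * exp (complex_of_real t * (\<Sum>j=1..k. complex_of_real (mu j) * (complex_of_real (1 / real j) * Aint (-\<theta>) j - 1)))"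
    unfolding fact c1 c2 by (intro tendsto_mult tendsto_exp expo_limit)
  with conv have "(\<integral>\<omega>. iexp (\<theta> * TA \<omega>) \<partial>M) =
       exp (complex_of_real t * (\<Sum>j=1..k. complex_of_real (lam j) * (complex_of_real (1 / real j) * Aint \<theta> j - 1)))
     * exp (complex_of_real t * (\<Sum>j=1..k. complex_of_real (mu j) * (complex_of_real (1 / real j) * Aint (-\<theta>) j - 1)))"
    by (rule LIMSEQ_unique)
  then show "char (distr M borel (time_avg (GSP M1 M2) t)) \<theta> =
       exp (complex_of_real t * (\<Sum>j=1..k. complex_of_real (lam j) * (complex_of_real (1 / real j) * Aint \<theta> j - 1)))
     * exp (complex_of_real t * (\<Sum>j=1..k. complex_of_real (mu j) * (complex_of_real (1 / real j) * Aint (-\<theta>) j - 1)))"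
    unfolding char_def TA_def[symmetric] using TAm unfolding TA_def[symmetric]
    by (subst integral_distr) auto
qed

lemma path_of_eval': "s \<ge> 0 \<Longrightarrow> path_of X \<omega> s = X s \<omega>"
  unfolding path_of_def by simp

lemma compound_char:
  fixes N :: "real \<Rightarrow> 'b \<Rightarrow> nat" and X :: "nat \<Rightarrow> 'b \<Rightarrow> real" and M' :: "'b measure"
  assumes poisson: "is_poisson_process M' r N"
    and X_dens: "\<And>i. i \<ge> 1 \<Longrightarrow> distributed M' lborel (X i) f"
    and X_indep: "prob_space.indep_vars M' (\<lambda>_. borel) X {1..}"
    and N_X_indep: "indep_rv M'
        (Pi\<^sub>M {0::real..} (\<lambda>_. count_space (UNIV::nat set))) (path_of N)
        (Pi\<^sub>M {1::nat..} (\<lambda>_. borel)) (\<lambda>\<omega>. \<lambda>i\<in>{1::nat..}. X i \<omega>)"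
    and t: "t \<ge> 0"
  shows "(\<lambda>\<omega>. \<Sum>i=1..N t \<omega>. X i \<omega>) \<in> borel_measurable M'"
    and "char (distr M' borel (\<lambda>\<omega>. \<Sum>i=1..N t \<omega>. X i \<omega>)) \<theta> =
       exp (complex_of_real t * (complex_of_real r * ((\<integral>x. iexp (\<theta> * x) \<partial>density lborel f) - 1)))"
proof -
  have G: "is_GCP M' 1 (\<lambda>_. r) N" using poisson unfolding is_poisson_process_def .
  interpret prob_space M' using gcp_basic(1)[OF G] .
  define \<phi> where "\<phi> = (\<integral>x. iexp (\<theta> * x) \<partial>density lborel f)"
  define Y where "Y = N t"
  define Z where "Z \<omega> = (\<Sum>i=1..Y \<omega>. X i \<omega>)" for \<omega>
  have Ym: "Y \<in> measurable M' (count_space UNIV)" unfolding Y_def by (rule gcp_basic(2)[OF G t])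
  have Xm: "X i \<in> borel_measurable M'" if "i \<ge> 1" for i
    using X_indep that unfolding indep_vars_def2 by auto
  have sumX: "(\<lambda>\<omega>. \<Sum>i=1..n. X i \<omega>) \<in> borel_measurable M'" for n
    using Xm by (intro borel_measurable_sum) auto
  have Zm: "Z \<in> borel_measurable M'"
    unfolding Z_def by (rule measurable_compose_countable[OF sumX Ym])
  then show "(\<lambda>\<omega>. \<Sum>i=1..N t \<omega>. X i \<omega>) \<in> borel_measurable M'" unfolding Z_def Y_def .
  have Xchar: "(\<integral>\<omega>. iexp (\<theta> * X i \<omega>) \<partial>M') = \<phi>" if i: "i \<ge> 1" for i
  proof -
    have D: "distr M' lborel (X i) = density lborel f" and Xl: "X i \<in> measurable M' lborel"
      using X_dens[OF i] unfolding distributed_def by auto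
    have "(\<integral>x. iexp (\<theta> * x) \<partial>distr M' lborel (X i)) = (\<integral>\<omega>. iexp (\<theta> * X i \<omega>) \<partial>M')"
      using Xl by (subst integral_distr) auto
    then show ?thesis unfolding \<phi>_def D by simp
  qed
  have phi1: "norm \<phi> \<le> 1"
  proof -
    have "norm \<phi> = norm (\<integral>\<omega>. iexp (\<theta> * X 1 \<omega>) \<partial>M')" using Xchar[of 1] by simp
    also have "\<dots> \<le> (\<integral>\<omega>. norm (iexp (\<theta> * X 1 \<omega>)) \<partial>M')" by (rule integral_norm_bound)
    also have "\<dots> = 1" by (simp add: prob_space)
    finally show ?thesis .
  qed
  define P where "P n \<omega> = (\<Prod>i=1..n. iexp (\<theta> * X i \<omega>))" for n \<omega>
  have Pm: "P n \<in> borel_measurable M'" for n unfolding P_def using Xm by measurable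
  have EP: "(\<integral>\<omega>. P n \<omega> \<partial>M') = \<phi> ^ n" for n
  proof -
    have "indep_vars (\<lambda>_. borel) X {1..n}" by (rule indep_vars_subset[OF X_indep]) auto
    then have iv: "indep_vars (\<lambda>_. borel) (\<lambda>i \<omega>. iexp (\<theta> * X i \<omega>)) {1..n}"
      using indep_vars_compose2[of "\<lambda>_. borel" X "{1..n}" "\<lambda>i x. iexp (\<theta> * x)" "\<lambda>_. borel"] by auto
    have "(\<integral>\<omega>. P n \<omega> \<partial>M') = (\<Prod>i=1..n. \<integral>\<omega>. iexp (\<theta> * X i \<omega>) \<partial>M')"
      unfolding P_def
    proof (rule indep_vars_lebesgue_integral[OF _ iv])
      show "\<And>i. i \<in> {1..n} \<Longrightarrow> integrable M' (\<lambda>\<omega>. iexp (\<theta> * X i \<omega>))"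
        using Xm integrable_iexp[of "\<lambda>\<omega>. complex_of_real (\<theta> * X _ \<omega>)"] by auto
    qed simp
    also have "\<dots> = (\<Prod>i=1..n. \<phi>)" by (rule prod.cong[OF refl], rule Xchar) auto
    finally show ?thesis by simp
  qed
  have iexpZ: "iexp (\<theta> * Z \<omega>) = P (Y \<omega>) \<omega>" for \<omega>
    unfolding Z_def P_def by (simp add: sum_distrib_left exp_sum[symmetric] algebra_simps)
  define s where "s m \<omega> = (\<Sum>n<m. complex_of_real (indicator {\<omega>\<in>space M'. Y \<omega> = n} \<omega>) * P n \<omega>)" for m \<omega>
  have ev: "{\<omega>\<in>space M'. Y \<omega> = n} \<in> sets M'" for n using Ym by measurable
  have sm: "s m \<in> borel_measurable M'" for m unfolding s_def using ev Pm by measurable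
  have normP: "norm (P n \<omega>) = 1" for n \<omega> unfolding P_def prod_norm[symmetric] norm_iexp by simp
  have s_eq: "s m \<omega> = (if Y \<omega> < m then P (Y \<omega>) \<omega> else 0)" if "\<omega> \<in> space M'" for m \<omega>
  proof -
    have "s m \<omega> = (\<Sum>n<m. (if n = Y \<omega> then P n \<omega> else 0))"
      unfolding s_def using that by (intro sum.cong) (auto simp: indicator_def)
    also have "\<dots> = (if Y \<omega> < m then P (Y \<omega>) \<omega> else 0)"
      by (simp add: sum.delta)
    finally show ?thesis .
  qed
  have conv: "(\<lambda>m. integral\<^sup>L M' (s m)) \<longlonglongrightarrow> (\<integral>\<omega>. iexp (\<theta> * Z \<omega>) \<partial>M')"
  proof (rule integral_dominated_convergence[where w="\<lambda>_. 1"])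
    show "(\<lambda>\<omega>. iexp (\<theta> * Z \<omega>)) \<in> borel_measurable M'" using Zm by measurable
    show "s m \<in> borel_measurable M'" for m by (rule sm)
    show "AE \<omega> in M'. (\<lambda>m. s m \<omega>) \<longlonglongrightarrow> iexp (\<theta> * Z \<omega>)"
    proof (rule AE_I2)
      fix \<omega> assume w: "\<omega> \<in> space M'"
      have "eventually (\<lambda>m. s m \<omega> = iexp (\<theta> * Z \<omega>)) sequentially"
        using eventually_gt_at_top[of "Y \<omega>"] by eventually_elim (use w s_eq iexpZ in auto)
      then show "(\<lambda>m. s m \<omega>) \<longlonglongrightarrow> iexp (\<theta> * Z \<omega>)" by (rule tendsto_eventually)
    qed
    show "AE \<omega> in M'. norm (s m \<omega>) \<le> 1" for m
      by (rule AE_I2) (auto simp: s_eq normP)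
  qed simp
  have Es: "integral\<^sup>L M' (s m) = (\<Sum>n<m. measure M' {\<omega>\<in>space M'. Y \<omega> = n} *\<^sub>R \<phi> ^ n)" for m
  proof -
    have trm: "(\<integral>\<omega>. complex_of_real (indicator {\<omega>\<in>space M'. Y \<omega> = n} \<omega>) * P n \<omega> \<partial>M')
        = measure M' {\<omega>\<in>space M'. Y \<omega> = n} *\<^sub>R \<phi> ^ n" for n
    proof -
      define F where "F p = complex_of_real (indicator {p::real\<Rightarrow>nat. p t = n} p)" for p
      define Gf where "Gf x = (\<Prod>i=1..n. iexp (\<theta> * x i))" for x :: "nat \<Rightarrow> real"
      have Fm: "F \<in> borel_measurable (Pi\<^sub>M {0::real..} (\<lambda>_. count_space (UNIV::nat set)))"
      proof -
        have "(\<lambda>p. p t) \<in> measurable (Pi\<^sub>M {0::real..} (\<lambda>_. count_space (UNIV::nat set))) (count_space UNIV)"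
          by (rule measurable_component_singleton) (use t in auto)
        then show ?thesis unfolding F_def by measurable
      qed
      have Gm: "Gf \<in> borel_measurable (Pi\<^sub>M {1::nat..} (\<lambda>_. borel))"
      proof -
        have "(\<lambda>x. x i) \<in> borel_measurable (Pi\<^sub>M {1::nat..} (\<lambda>_. borel))" if "i \<in> {1..n}" for i
          by (rule measurable_component_singleton) (use that in auto)
        then show ?thesis unfolding Gf_def by measurable
      qed
      have e1: "(\<lambda>\<omega>. F (path_of N \<omega>)) = (\<lambda>\<omega>. complex_of_real (indicator {\<omega>. Y \<omega> = n} \<omega>))"
        unfolding F_def Y_def using t by (auto simp: path_of_eval' indicator_def)
      have e2: "(\<lambda>\<omega>. Gf (\<lambda>i\<in>{1::nat..}. X i \<omega>)) = P n"
        unfolding Gf_def P_def by (auto intro!: prod.cong)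
      have iv: "indep_var borel (\<lambda>\<omega>. complex_of_real (indicator {\<omega>. Y \<omega> = n} \<omega>)) borel (P n)"
        using indep_rv_compose[OF prob_space_axioms N_X_indep Fm Gm] unfolding e1 e2 .
      have "(\<integral>\<omega>. complex_of_real (indicator {\<omega>\<in>space M'. Y \<omega> = n} \<omega>) * P n \<omega> \<partial>M')
          = (\<integral>\<omega>. complex_of_real (indicator {\<omega>. Y \<omega> = n} \<omega>) * P n \<omega> \<partial>M')"
        by (intro Bochner_Integration.integral_cong refl) (auto simp: indicator_def)
      also have "\<dots> = (\<integral>\<omega>. complex_of_real (indicator {\<omega>. Y \<omega> = n} \<omega>) \<partial>M') * (\<integral>\<omega>. P n \<omega> \<partial>M')"
      proof (rule indep_var_lebesgue_integral[OF iv])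
        show "integrable M' (\<lambda>\<omega>. complex_of_real (indicator {\<omega>. Y \<omega> = n} \<omega>))"
          using ev[of n] by (intro integrable_const_bound[where B=1]) (auto simp: indicator_def)
        show "integrable M' (P n)"
          using Pm by (intro integrable_const_bound[where B=1]) (auto simp: normP)
      qed
      also have "(\<integral>\<omega>. complex_of_real (indicator {\<omega>. Y \<omega> = n} \<omega>) \<partial>M') = complex_of_real (measure M' {\<omega>\<in>space M'. Y \<omega> = n})"
      proof -
        have "{\<omega>. Y \<omega> = n} \<inter> space M' = {\<omega>\<in>space M'. Y \<omega> = n}" by auto
        then show ?thesis by simp
      qed
      finally show ?thesis by (simp add: EP scaleR_conv_of_real)
    qed
    have intt: "integrable M' (\<lambda>\<omega>. complex_of_real (indicator {\<omega>\<in>space M'. Y \<omega> = n} \<omega>) * P n \<omega>)" for n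
    proof (rule integrable_const_bound[where B=1])
      show "AE x in M'. norm (complex_of_real (indicator {\<omega>\<in>space M'. Y \<omega> = n} x) * P n x) \<le> 1"
        by (rule AE_I2) (simp add: norm_mult normP indicator_def)
      show "(\<lambda>\<omega>. complex_of_real (indicator {\<omega>\<in>space M'. Y \<omega> = n} \<omega>) * P n \<omega>) \<in> borel_measurable M'"
        using ev[of n] Pm[of n] by measurable
    qed
    have "integral\<^sup>L M' (s m) = (\<Sum>n<m. \<integral>\<omega>. complex_of_real (indicator {\<omega>\<in>space M'. Y \<omega> = n} \<omega>) * P n \<omega> \<partial>M')"
      unfolding s_def by (rule Bochner_Integration.integral_sum[where f="\<lambda>n \<omega>. complex_of_real (indicator {\<omega>\<in>space M'. Y \<omega> = n} \<omega>) * P n \<omega>"]) (rule intt)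
    also have "\<dots> = (\<Sum>n<m. measure M' {\<omega>\<in>space M'. Y \<omega> = n} *\<^sub>R \<phi> ^ n)"
      by (rule sum.cong[OF refl]) (rule trm)
    finally show ?thesis .
  qed
  have sums1: "(\<lambda>n. measure M' {\<omega>\<in>space M'. Y \<omega> = n} *\<^sub>R \<phi> ^ n) sums (\<integral>\<omega>. \<phi> ^ Y \<omega> \<partial>M')"
    by (rule nat_rv_sums[OF prob_space_axioms Ym, where B=1]) (simp add: norm_power power_le_one phi1)
  have "(\<integral>\<omega>. iexp (\<theta> * Z \<omega>) \<partial>M') = (\<integral>\<omega>. \<phi> ^ Y \<omega> \<partial>M')"
    using conv sums1 unfolding Es sums_def by (rule LIMSEQ_unique)
  also have "\<dots> = exp (complex_of_real t * (\<Sum>j=1..1. complex_of_real r * (\<phi> ^ j - 1)))"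
    unfolding Y_def by (rule gcp_pgf[OF G t phi1])
  finally have "(\<integral>\<omega>. iexp (\<theta> * Z \<omega>) \<partial>M') = exp (complex_of_real t * (complex_of_real r * (\<phi> - 1)))"
    by simp
  then show "char (distr M' borel (\<lambda>\<omega>. \<Sum>i=1..N t \<omega>. X i \<omega>)) \<theta> =
       exp (complex_of_real t * (complex_of_real r * ((\<integral>x. iexp (\<theta> * x) \<partial>density lborel f) - 1)))"
    unfolding char_def \<phi>_def[symmetric] using Zm unfolding Z_def Y_def
    by (subst integral_distr) auto
qed

lemma int_piece_pos:
  "(\<integral>x. indicator {0..real j} x *\<^sub>R iexp (a * x) \<partial>lborel) = Aint a j"
proof -
  have si: "set_integrable lborel {0..real j} (\<lambda>x. iexp (a * x))"
    by (rule borel_integrable_atLeastAtMost') (intro continuous_intros)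
  show ?thesis using set_borel_integral_eq_integral(2)[OF si]
    unfolding Aint_def set_lebesgue_integral_def by simp
qed

lemma int_piece_neg:
  "(\<integral>x. indicator {-real j..0} x *\<^sub>R iexp (a * x) \<partial>lborel) = Aint (-a) j"
proof -
  have si: "set_integrable lborel {-real j..0} (\<lambda>x. iexp (a * x))"
    by (rule borel_integrable_atLeastAtMost') (intro continuous_intros)
  have "(\<integral>x. indicator {-real j..0} x *\<^sub>R iexp (a * x) \<partial>lborel) = integral {-real j..0} (\<lambda>x. iexp (a * x))"
    using set_borel_integral_eq_integral(2)[OF si] unfolding set_lebesgue_integral_def by simp
  also have "\<dots> = integral {-real j..-0} (\<lambda>x. (\<lambda>y. iexp (-a * y)) (-x))" by simp
  also have "\<dots> = integral {0..real j} (\<lambda>y. iexp (-a * y))"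
    by (rule Henstock_Kurzweil_Integration.integral_reflect_real[where a=0 and b="real j" and f="\<lambda>y. iexp (-a*y)"])
  finally show ?thesis unfolding Aint_def .
qed

lemma int_piece_integrable:
  "integrable lborel (\<lambda>x. indicator {c..d} x *\<^sub>R iexp (a * x))"
  by (rule borel_integrable_compact) (auto intro!: continuous_intros)

lemma phi_compute:
  assumes lam: "\<And>j. j \<in> {1..k} \<Longrightarrow> lam j \<ge> 0" and mu: "\<And>j. j \<in> {1..k} \<Longrightarrow> mu j \<ge> 0"
    and pos: "(\<Sum>j=1..k. lam j) + (\<Sum>j=1..k. mu j) > 0"
  shows "(\<integral>x. iexp (\<theta> * x) \<partial>density lborel (\<lambda>x. ennreal (gsp_density k lam mu x)))
    = (\<Sum>j=1..k. complex_of_real (lam j / (((\<Sum>j=1..k. lam j) + (\<Sum>j=1..k. mu j)) * real j)) * Aint \<theta> j)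
    + (\<Sum>j=1..k. complex_of_real (mu j / (((\<Sum>j=1..k. lam j) + (\<Sum>j=1..k. mu j)) * real j)) * Aint (-\<theta>) j)"
proof -
  define L where "L = (\<Sum>j=1..k. lam j) + (\<Sum>j=1..k. mu j)"
  have dm: "gsp_density k lam mu \<in> borel_measurable lborel"
    unfolding gsp_density_def by measurable
  have dnn: "gsp_density k lam mu x \<ge> 0" for x
    unfolding gsp_density_def using lam mu pos
    by (intro add_nonneg_nonneg mult_nonneg_nonneg sum_nonneg divide_nonneg_nonneg) auto
  have step1: "(\<integral>x. iexp (\<theta> * x) \<partial>density lborel (\<lambda>x. ennreal (gsp_density k lam mu x)))
      = (\<integral>x. gsp_density k lam mu x *\<^sub>R iexp (\<theta> * x) \<partial>lborel)"
    by (rule integral_density) (use dm dnn in auto)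
  define F where "F j x = indicator {0..real j} x *\<^sub>R iexp (\<theta> * x)" for j x
  define Gn where "Gn j x = indicator {-real j..0} x *\<^sub>R iexp (\<theta> * x)" for j x
  have Fi: "integrable lborel (F j)" for j unfolding F_def by (rule int_piece_integrable)
  have Gi: "integrable lborel (Gn j)" for j unfolding Gn_def by (rule int_piece_integrable)
  have FI: "integral\<^sup>L lborel (F j) = Aint \<theta> j" for j unfolding F_def by (rule int_piece_pos)
  have GI: "integral\<^sup>L lborel (Gn j) = Aint (-\<theta>) j" for j unfolding Gn_def by (rule int_piece_neg)
  have i1: "integrable lborel (\<lambda>x. \<Sum>j=1..k. (lam j / (L * real j)) *\<^sub>R F j x)"
    using Fi by (intro Bochner_Integration.integrable_sum integrable_scaleR_right) auto
  have i2: "integrable lborel (\<lambda>x. \<Sum>j=1..k. (mu j / (L * real j)) *\<^sub>R Gn j x)"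
    using Gi by (intro Bochner_Integration.integrable_sum integrable_scaleR_right) auto
  have "(\<integral>x. gsp_density k lam mu x *\<^sub>R iexp (\<theta> * x) \<partial>lborel)
      = (\<integral>x. (\<Sum>j=1..k. (lam j / (L * real j)) *\<^sub>R F j x) + (\<Sum>j=1..k. (mu j / (L * real j)) *\<^sub>R Gn j x) \<partial>lborel)"
    by (intro Bochner_Integration.integral_cong refl)
       (simp add: gsp_density_def L_def F_def Gn_def scaleR_add_left scaleR_sum_left sum_distrib_left)
  also have "\<dots> = (\<integral>x. (\<Sum>j=1..k. (lam j / (L * real j)) *\<^sub>R F j x) \<partial>lborel) + (\<integral>x. (\<Sum>j=1..k. (mu j / (L * real j)) *\<^sub>R Gn j x) \<partial>lborel)"
    by (rule Bochner_Integration.integral_add[OF i1 i2])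
  also have "(\<integral>x. (\<Sum>j=1..k. (lam j / (L * real j)) *\<^sub>R F j x) \<partial>lborel) = (\<Sum>j=1..k. \<integral>x. (lam j / (L * real j)) *\<^sub>R F j x \<partial>lborel)"
    by (rule Bochner_Integration.integral_sum[where f="\<lambda>j x. (lam j / (L * real j)) *\<^sub>R F j x"]) (use Fi in auto)
  also have "(\<integral>x. (\<Sum>j=1..k. (mu j / (L * real j)) *\<^sub>R Gn j x) \<partial>lborel) = (\<Sum>j=1..k. \<integral>x. (mu j / (L * real j)) *\<^sub>R Gn j x \<partial>lborel)"
    by (rule Bochner_Integration.integral_sum[where f="\<lambda>j x. (mu j / (L * real j)) *\<^sub>R Gn j x"]) (use Gi in auto)
  also have "(\<Sum>j=1..k. \<integral>x. (lam j / (L * real j)) *\<^sub>R F j x \<partial>lborel) = (\<Sum>j=1..k. complex_of_real (lam j / (L * real j)) * Aint \<theta> j)"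
    by (rule sum.cong[OF refl]) (simp only: integral_scaleR_right FI, simp only: scaleR_conv_of_real)
  also have "(\<Sum>j=1..k. \<integral>x. (mu j / (L * real j)) *\<^sub>R Gn j x \<partial>lborel) = (\<Sum>j=1..k. complex_of_real (mu j / (L * real j)) * Aint (-\<theta>) j)"
    by (rule sum.cong[OF refl]) (simp only: integral_scaleR_right GI, simp only: scaleR_conv_of_real)
  finally show ?thesis using step1 unfolding L_def by simp
qed

theorem theorem7p1:
  fixes M :: "'a measure" and M' :: "'b measure"
    and k :: nat and lam mu :: "nat \<Rightarrow> real"
    and M1 M2 :: "real \<Rightarrow> 'a \<Rightarrow> nat"
    and N :: "real \<Rightarrow> 'b \<Rightarrow> nat" and X :: "nat \<Rightarrow> 'b \<Rightarrow> real"
  assumes gsp: "is_GSP_pair M k lam mu M1 M2"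
    and pos: "(\<Sum>j=1..k. lam j) + (\<Sum>j=1..k. mu j) > 0"
    and poisson: "is_poisson_process M' ((\<Sum>j=1..k. lam j) + (\<Sum>j=1..k. mu j)) N"
    and X_dens: "\<And>i. i \<ge> 1 \<Longrightarrow>
        distributed M' lborel (X i) (\<lambda>x. ennreal (gsp_density k lam mu x))"
    and X_indep: "prob_space.indep_vars M' (\<lambda>_. borel) X {1..}"
    and N_X_indep: "indep_rv M'
        (Pi\<^sub>M {0::real..} (\<lambda>_. count_space (UNIV::nat set))) (path_of N)
        (Pi\<^sub>M {1::nat..} (\<lambda>_. borel)) (\<lambda>\<omega>. \<lambda>i\<in>{1::nat..}. X i \<omega>)"
    and t_pos: "t > 0"
  shows "distr M borel (time_avg (GSP M1 M2) t)
       = distr M' borel (\<lambda>\<omega>. \<Sum>i=1..N t \<omega>. X i \<omega>)"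
proof -
  define L where "L = (\<Sum>j=1..k. lam j) + (\<Sum>j=1..k. mu j)"
  have Lpos: "L > 0" using pos unfolding L_def .
  have G1: "is_GCP M k lam M1" and G2: "is_GCP M k mu M2" using gsp unfolding is_GSP_pair_def by auto
  have lam0: "\<And>j. j \<in> {1..k} \<Longrightarrow> lam j \<ge> 0" using G1 unfolding is_GCP_def by auto
  have mu0: "\<And>j. j \<in> {1..k} \<Longrightarrow> mu j \<ge> 0" using G2 unfolding is_GCP_def by auto
  have PM: "prob_space M" by (rule gcp_basic(1)[OF G1])
  have PM': "prob_space M'" using poisson unfolding is_poisson_process_def by (rule gcp_basic(1))
  note lhs = gsp_char[OF gsp t_pos]
  have rhs1: "(\<lambda>\<omega>. \<Sum>i=1..N t \<omega>. X i \<omega>) \<in> borel_measurable M'"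
    by (rule compound_char(1)[OF poisson _ X_indep N_X_indep]) (use X_dens t_pos in auto)
  have rhs2: "char (distr M' borel (\<lambda>\<omega>. \<Sum>i=1..N t \<omega>. X i \<omega>)) \<theta> =
       exp (complex_of_real t * (complex_of_real ((\<Sum>j=1..k. lam j) + (\<Sum>j=1..k. mu j)) *
         ((\<integral>x. iexp (\<theta> * x) \<partial>density lborel (\<lambda>x. ennreal (gsp_density k lam mu x))) - 1)))" for \<theta>
    by (rule compound_char(2)[OF poisson _ X_indep N_X_indep]) (use X_dens t_pos in auto)
  show ?thesis
  proof (rule Levy_uniqueness)
    show "real_distribution (distr M borel (time_avg (GSP M1 M2) t))"
      using prob_space.real_distribution_distr[OF PM lhs(1)] .
    show "real_distribution (distr M' borel (\<lambda>\<omega>. \<Sum>i=1..N t \<omega>. X i \<omega>))"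
      using prob_space.real_distribution_distr[OF PM' rhs1] .
    show "char (distr M borel (time_avg (GSP M1 M2) t)) = char (distr M' borel (\<lambda>\<omega>. \<Sum>i=1..N t \<omega>. X i \<omega>))"
    proof
      fix \<theta> :: real
      define A where "A = (\<Sum>j=1..k. complex_of_real (lam j) * (complex_of_real (1 / real j) * Aint \<theta> j - 1))"
      define B where "B = (\<Sum>j=1..k. complex_of_real (mu j) * (complex_of_real (1 / real j) * Aint (-\<theta>) j - 1))"
      define \<phi> where "\<phi> = (\<Sum>j=1..k. complex_of_real (lam j / (L * real j)) * Aint \<theta> j)
        + (\<Sum>j=1..k. complex_of_real (mu j / (L * real j)) * Aint (-\<theta>) j)"
      have r: "complex_of_real L * (complex_of_real (x / (L * real j)) * z) = complex_of_real x * (complex_of_real (1 / real j) * z)" for x j z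
      proof -
        have "L * (x / (L * real j)) = x * (1 / real j)" using Lpos by (cases "j = 0") (simp_all add: field_simps)
        then have "complex_of_real L * complex_of_real (x / (L * real j)) = complex_of_real x * complex_of_real (1 / real j)"
          by (simp only: of_real_mult[symmetric])
        then show ?thesis by (simp only: mult.assoc[symmetric])
      qed
      have Lphi: "complex_of_real L * \<phi> = (\<Sum>j=1..k. complex_of_real (lam j) * (complex_of_real (1 / real j) * Aint \<theta> j))
          + (\<Sum>j=1..k. complex_of_real (mu j) * (complex_of_real (1 / real j) * Aint (-\<theta>) j))"
        unfolding \<phi>_def distrib_left sum_distrib_left r ..
      have Lc: "complex_of_real L = (\<Sum>j=1..k. complex_of_real (lam j)) + (\<Sum>j=1..k. complex_of_real (mu j))"
        unfolding L_def by simp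
      have AB: "complex_of_real L * (\<phi> - 1) = A + B"
      proof -
        have "complex_of_real L * (\<phi> - 1) = complex_of_real L * \<phi> - complex_of_real L"
          by (simp add: right_diff_distrib)
        also have "\<dots> = ((\<Sum>j=1..k. complex_of_real (lam j) * (complex_of_real (1 / real j) * Aint \<theta> j))
          + (\<Sum>j=1..k. complex_of_real (mu j) * (complex_of_real (1 / real j) * Aint (-\<theta>) j)))
          - ((\<Sum>j=1..k. complex_of_real (lam j)) + (\<Sum>j=1..k. complex_of_real (mu j)))"
          by (simp only: Lphi, simp only: Lc)
        also have "\<dots> = A + B"
          unfolding A_def B_def by (simp only: right_diff_distrib sum_subtractf mult_1_right) (simp add: algebra_simps)
        finally show ?thesis .
      qed
      have "char (distr M borel (time_avg (GSP M1 M2) t)) \<theta> = exp (complex_of_real t * A) * exp (complex_of_real t * B)"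
        unfolding A_def B_def by (rule lhs(2))
      also have "\<dots> = exp (complex_of_real t * (complex_of_real L * (\<phi> - 1)))"
        unfolding AB by (simp add: distrib_left exp_add)
      also have "\<dots> = char (distr M' borel (\<lambda>\<omega>. \<Sum>i=1..N t \<omega>. X i \<omega>)) \<theta>"
        unfolding rhs2 \<phi>_def L_def using phi_compute[OF lam0 mu0 pos, of \<theta>] by simp
      finally show "char (distr M borel (time_avg (GSP M1 M2) t)) \<theta> = char (distr M' borel (\<lambda>\<omega>. \<Sum>i=1..N t \<omega>. X i \<omega>)) \<theta>" .
    qed
  qed
qed

end
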